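(* For every $n \geqslant 2$ there exist a finite alphabet $\Sigma_n$, a partial function $\delta_n: \{1,\ldots,n\} \times \Sigma_n \to \{1,\ldots,n\} \times \{-1,+1\}$, and a string $w_n \in \Sigma_n^*$ of length $3 \cdot 2^{n-2} - 1$ such that: (1) for every position $i \in \{1, \ldots, |w_n|\}$, the computation of $\delta_n$ on $w_n$ started at position $i$ in state $n$ leaves $w_n$, and the first time it leaves $w_n$ it does so by a move from position $|w_n|$ to the right into state $1$; (2) for every nonempty string $u \in \Sigma_n^*$, if there exists a position $i \in \{1,\ldots,|u|\}$ such that the computation of $\delta_n$ on $u$ started at position $i$ in state $n$ leaves $u$, and the first time it leaves $u$ it does so by a move from position $|u|$ to the right into state $1$, then $|u| \geqslant |w_n|$.
   Context: For a partial transition function $\delta: Q \times \Sigma \to Q \times \{-1,+1\}$ (no end-markers, no initial or accepting states) and a string $u = c_1 \cdots c_m \in \Sigma^*$, the computation started at position $i \in \{1,\ldots,m\}$ in state $q$ is the sequence of configurations (state, position) defined as follows: in configuration $(p, j)$ with $1 \leqslant j \leqslant m$, if $\delta(p, c_j) = (r, d)$ the next configuration is $(r, j+d)$; if $\delta(p, c_j)$ is undefined the computation halts without leaving $u$. The computation leaves $u$ when it reaches a position $j+d \notin \{1,\ldots,m\}$, i.e. moves left from position $1$ or right from position $m$; it may also run forever inside $u$. *)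

theory Defs
  imports Main
begin

definition partial_tf :: "nat \<Rightarrow> nat set \<Rightarrow> (nat \<Rightarrow> nat \<Rightarrow> (nat \<times> int) option) \<Rightarrow> bool" where
  "partial_tf n Sig delta \<longleftrightarrow>
     (\<forall>q c r d. delta q c = Some (r, d) \<longrightarrow>
        q \<in> {1..n} \<and> c \<in> Sig \<and> r \<in> {1..n} \<and> d \<in> {-1, 1})"

text \<open>exits delta u p j q k: the computation of delta on u started at position j
  (1-based) in state p leaves u, and the (first) time it leaves u it reaches
  configuration (q, k) with k outside {1..|u|}.\<close>
inductive exits :: "(nat \<Rightarrow> nat \<Rightarrow> (nat \<times> int) option) \<Rightarrow> nat list \<Rightarrow> nat \<Rightarrow> int \<Rightarrow> nat \<Rightarrow> int \<Rightarrow> bool"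
  for delta u where
  leave: "\<lbrakk> 1 \<le> j; j \<le> int (length u); delta p (u ! nat (j - 1)) = Some (r, d);
           j + d \<notin> {1..int (length u)} \<rbrakk> \<Longrightarrow> exits delta u p j r (j + d)"
| move: "\<lbrakk> 1 \<le> j; j \<le> int (length u); delta p (u ! nat (j - 1)) = Some (r, d);
           j + d \<in> {1..int (length u)}; exits delta u r (j + d) q k \<rbrakk> \<Longrightarrow> exits delta u p j q k"

end

theory Submission
  imports Defs
begin


fun D :: "nat \<Rightarrow> nat \<Rightarrow> nat \<Rightarrow> (nat \<times> int) option" where
"D n q c = (if n \<le> 2 then
    (if q = 2 \<and> c = 0 then Some (2,1) else if q = 2 \<and> c = 1 then Some (1,-1)
     else if q = 1 \<and> c \<le> 1 then Some (1,1) else None)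
  else if c mod 3 = 2 then (if q = n then Some (n-1,-1) else if q = 1 then Some (n-1,1) else None)
  else if q = n then Some (n, if c mod 3 = 0 then 1 else -1)
  else D (n-1) q (c div 3))"

declare D.simps[simp del]

lemma D_range: "D n q c = Some (r,d) \<Longrightarrow> 2 \<le> n \<Longrightarrow> 1 \<le> q \<and> q \<le> n \<and> 1 \<le> r \<and> r \<le> n \<and> (d = 1 \<or> d = -1)"
proof (induction n q c rule: D.induct)
  case (1 n q c)
  show ?case
  proof (cases "n \<le> 2")
    case True with 1 show ?thesis by (subst (asm) D.simps) (auto split: if_splits)
  next
    case False
    then have n2: "2 \<le> n-1" by auto
    show ?thesis
    proof (cases "c mod 3 = 2 \<or> q = n")
      case True
      with 1(2,3) False show ?thesis by (subst (asm) D.simps) (auto split: if_splits)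
    next
      case F2: False
      with 1(2) False have e: "D (n-1) q (c div 3) = Some (r,d)" by (subst (asm) D.simps) auto
      from 1(1)[OF False _ _ e n2] F2 show ?thesis by auto
    qed
  qed
qed

lemma D_low: "3 \<le> n \<Longrightarrow> q < n \<Longrightarrow> c mod 3 \<noteq> 2 \<Longrightarrow> D n q c = D (n-1) q (c div 3)"
  by (subst D.simps) auto
lemma D_hash: "3 \<le> n \<Longrightarrow> c mod 3 = 2 \<Longrightarrow> D n q c = (if q = n then Some (n-1,-1) else if q = 1 then Some (n-1,1) else None)"
  by (subst D.simps) auto
lemma D_top: "3 \<le> n \<Longrightarrow> c mod 3 \<noteq> 2 \<Longrightarrow> D n n c = Some (n, if c mod 3 = 0 then 1 else -1)"
  by (subst D.simps) auto
lemma D_less: "3 \<le> n \<Longrightarrow> q < n \<Longrightarrow> D n q c = Some (r,d) \<Longrightarrow> r < n"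
proof (cases "c mod 3 = 2")
  case True
  assume "3 \<le> n" "q < n" "D n q c = Some (r,d)"
  then show ?thesis using True by (auto simp: D_hash split: if_splits)
next
  case False
  assume a: "3 \<le> n" "q < n" "D n q c = Some (r,d)"
  then have "D (n-1) q (c div 3) = Some (r,d)" using False D_low by simp
  moreover have "2 \<le> n-1" using a by auto
  ultimately have "r \<le> n-1" using D_range by blast
  then show ?thesis using a by auto
qed

fun W :: "nat \<Rightarrow> nat list" where
"W n = (if n \<le> 2 then [0,1] else map (\<lambda>c. 3*c) (W (n-1)) @ [2] @ map (\<lambda>c. 3*c+1) (W (n-1)))"
declare W.simps[simp del]

lemma len_W: "2 \<le> n \<Longrightarrow> length (W n) = 3*2^(n-2) - 1"
proof (induction n rule: nat_induct_at_least)
  case base then show ?case by (simp add: W.simps)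
next
  case (Suc n)
  have "length (W (Suc n)) = 2 * length (W n) + 1" by (subst W.simps) (use Suc(1) in simp)
  also have "\<dots> = 3*2^(Suc n - 2) - 1"
  proof -
    obtain k where k: "n = k + 2" using Suc(1) by (metis add.commute le_Suc_ex)
    have h: "(1::nat) \<le> 2^k" by simp
    have e: "3 * 2^(k+1) = 6 * (2::nat)^k" by simp
    have "2 * (3*2^k - 1) + 1 = 6 * 2^k - (1::nat)" using h by linarith
    then have "2 * (3*2^k - 1) + 1 = 3 * 2^(k+1) - (1::nat)" using e by simp
    then show ?thesis using Suc(2) k by simp
  qed
  finally show ?case .
qed



inductive exn :: "(nat \<Rightarrow> nat \<Rightarrow> (nat \<times> int) option) \<Rightarrow> nat list \<Rightarrow> nat \<Rightarrow> nat \<Rightarrow> int \<Rightarrow> nat \<Rightarrow> int \<Rightarrow> bool"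
  for delta u where
  leave: "\<lbrakk> 1 \<le> j; j \<le> int (length u); delta p (u ! nat (j - 1)) = Some (r, d);
           j + d \<notin> {1..int (length u)} \<rbrakk> \<Longrightarrow> exn delta u 0 p j r (j + d)"
| move: "\<lbrakk> 1 \<le> j; j \<le> int (length u); delta p (u ! nat (j - 1)) = Some (r, d);
           j + d \<in> {1..int (length u)}; exn delta u m r (j + d) q k \<rbrakk> \<Longrightarrow> exn delta u (Suc m) p j q k"

lemma exn_exits: "exn \<delta> u m p j q k \<Longrightarrow> exits \<delta> u p j q k"
  by (induction rule: exn.induct) (auto intro: exits.intros)

lemma exits_exn: "exits \<delta> u p j q k \<Longrightarrow> \<exists>m. exn \<delta> u m p j q k"
proof (induction rule: exits.induct)
  case (leave j p r d)
  then show ?case by (blast intro: exn.leave)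
next
  case (move j p r d q k)
  then obtain m where "exn \<delta> u m r (j + d) q k" by blast
  then show ?case using move(1-4) by (blast intro: exn.move)
qed

lemma exits_mono: "exits \<delta> u p j q k \<Longrightarrow> (\<forall>q c x. \<delta> q c = Some x \<longrightarrow> \<delta>' q c = Some x) \<Longrightarrow> exits \<delta>' u p j q k"
  by (induction rule: exits.induct) (auto intro: exits.intros)

lemma exits_cong: "exits \<delta> u p j q k \<Longrightarrow> (\<forall>q c. c \<in> set u \<longrightarrow> \<delta>' q c = \<delta> q c) \<Longrightarrow> exits \<delta>' u p j q k"
proof (induction rule: exits.induct)
  case (leave j p r d)
  have "u ! nat (j-1) \<in> set u" using leave(1,2) by (intro nth_mem) linarith
  then show ?case using leave by (auto intro: exits.leave)
next
  case (move j p r d q k)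
  have "u ! nat (j-1) \<in> set u" using move(1,2) by (intro nth_mem) linarith
  then show ?case using move by (auto intro: exits.move)
qed

lemma exits_pos: "exits \<delta> u p j q k \<Longrightarrow> 1 \<le> j \<and> j \<le> int (length u)"
  by (cases rule: exits.cases) auto

lemma exn_pos: "exn \<delta> u m p j q k \<Longrightarrow> 1 \<le> j \<and> j \<le> int (length u)"
  by (cases rule: exn.cases) auto

lemma exits_res: "exits (D m) v p j q k \<Longrightarrow> 2 \<le> m \<Longrightarrow> (k = 0 \<or> k = int (length v) + 1) \<and> 1 \<le> q \<and> q \<le> m"
proof (induction rule: exits.induct)
  case (leave j p r d)
  from D_range[OF leave(3) leave(5)] leave show ?case by auto
next
  case (move j p r d q k)
  then show ?case by auto
qed

lemma nth_mid: "int (length x) < j \<Longrightarrow> j \<le> int (length x + length y) \<Longrightarrow>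
   (x @ y @ z) ! nat (j - 1) = y ! nat (j - int (length x) - 1)"
proof -
  assume a: "int (length x) < j" "j \<le> int (length x + length y)"
  define t where "t = nat (j - int (length x) - 1)"
  have t: "nat (j - 1) = length x + t" "t < length y" using a unfolding t_def by auto
  show ?thesis using t unfolding t_def[symmetric] by (simp add: nth_append)
qed

lemma crop:
  assumes "exn \<delta> u m p j q k" "u = x @ y @ z" "int (length x) < j" "j \<le> int (length x + length y)"
  shows "\<exists>q' k'. exits \<delta> y p (j - int (length x)) q' k' \<and> k' \<notin> {1..int (length y)} \<and>
     (if k' + int (length x) \<in> {1..int (length u)} then (\<exists>m'<m. exn \<delta> u m' q' (k' + int (length x)) q k)
      else q' = q \<and> k' + int (length x) = k)"
  using assms
proof (induction rule: exn.induct)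
  case (leave j p r d)
  have L: "\<delta> p (y ! nat (j - int (length x) - 1)) = Some (r, d)"
    using leave nth_mid[of x j y z] by simp
  have n: "j - int (length x) + d \<notin> {1..int (length y)}" using leave by auto
  have "exits \<delta> y p (j - int (length x)) r (j - int (length x) + d)"
    by (rule exits.leave) (use leave L n in auto)
  then show ?case using n leave(4) by (intro exI[of _ r] exI[of _ "j - int (length x) + d"]) auto
next
  case (move j p r d m q k)
  have L: "\<delta> p (y ! nat (j - int (length x) - 1)) = Some (r, d)"
    using move nth_mid[of x j y z] by simp
  show ?case
  proof (cases "j + d \<in> {int (length x) + 1..int (length x + length y)}")
    case True
    then obtain q' k' where o: "exits \<delta> y r (j + d - int (length x)) q' k'" "k' \<notin> {1..int (length y)}"
      "(if k' + int (length x) \<in> {1..int (length u)} then (\<exists>m'<m. exn \<delta> u m' q' (k' + int (length x)) q k)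
      else q' = q \<and> k' + int (length x) = k)" using move(6)[OF move(7)] True by auto
    have o1: "exits \<delta> y r (j - int (length x) + d) q' k'" using o(1) by (simp add: algebra_simps)
    have j1: "1 \<le> j - int (length x)" "j - int (length x) \<le> int (length y)"
      "j - int (length x) + d \<in> {1..int (length y)}" using move(8,9) True by auto
    have "exits \<delta> y p (j - int (length x)) q' k'"
      by (rule exits.move[where delta=\<delta> and r=r and d=d, OF j1(1,2) L j1(3) o1])
    then show ?thesis using o by (intro exI[of _ q'] exI[of _ k']) (auto split: if_splits intro: less_SucI)
  next
    case False
    have n: "j - int (length x) + d \<notin> {1..int (length y)}" using False by auto
    have "exits \<delta> y p (j - int (length x)) r (j - int (length x) + d)"
      by (rule exits.leave) (use move L n in auto)
    then show ?thesis using n move(4,5) by (intro exI[of _ r] exI[of _ "j - int (length x) + d"]) auto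
  qed
qed

lemma strip:
  assumes "exits (D n) y p j q k" "3 \<le> n" "p < n" "\<forall>c\<in>set y. c mod 3 \<noteq> 2"
  shows "exits (D (n-1)) (map (\<lambda>c. c div 3) y) p j q k"
  using assms
proof (induction rule: exits.induct)
  case (leave j p r d)
  have i: "nat (j-1) < length y" using leave(1,2) by linarith
  then have "y ! nat (j-1) mod 3 \<noteq> 2" using leave(7) nth_mem by blast
  then have "D (n-1) p (map (\<lambda>c. c div 3) y ! nat (j-1)) = Some (r,d)"
    using leave(3,5,6) D_low i by simp
  then show ?case using leave(1,2,4) by (auto intro: exits.leave)
next
  case (move j p r d q k)
  have i: "nat (j-1) < length y" using move(1,2) by linarith
  then have "y ! nat (j-1) mod 3 \<noteq> 2" using move(9) nth_mem by blast
  then have e: "D (n-1) p (map (\<lambda>c. c div 3) y ! nat (j-1)) = Some (r,d)"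
    using move(3,7,8) D_low i by simp
  have "r < n" using D_less move(3,7,8) by blast
  then have "exits (D (n-1)) (map (\<lambda>c. c div 3) y) r (j+d) q k" using move(6,7,9) by blast
  then show ?case using move(1,2,4) e by (auto intro: exits.move)
qed

lemma embed:
  assumes "exits \<delta>' v p j q k" "p \<in> Q" "\<forall>q c. q \<in> Q \<longrightarrow> \<delta> q (f c) = \<delta>' q c"
    "\<forall>q c r d. q \<in> Q \<longrightarrow> \<delta>' q c = Some (r,d) \<longrightarrow> r \<in> Q" "u = x @ map f v @ z"
  shows "(k + int (length x) \<in> {1..int (length u)} \<longrightarrow> (\<forall>q2 k2. exits \<delta> u q (k + int (length x)) q2 k2 \<longrightarrow> exits \<delta> u p (j + int (length x)) q2 k2)) \<and>
         (k + int (length x) \<notin> {1..int (length u)} \<longrightarrow> exits \<delta> u p (j + int (length x)) q (k + int (length x)))"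
  using assms
proof (induction rule: exits.induct)
  case (leave j p r d)
  have "u ! nat (j + int (length x) - 1) = map f v ! nat (j - 1)"
    using nth_mid[of x "j + int (length x)" "map f v" z] leave(1,2,8) by simp
  also have "\<dots> = f (v ! nat (j-1))" using leave(1,2) by (simp add: nat_less_iff)
  finally have L: "\<delta> p (u ! nat (j + int (length x) - 1)) = Some (r,d)" using leave(3,5,6) by simp
  have p: "1 \<le> j + int (length x)" "j + int (length x) \<le> int (length u)" using leave(1,2,8) by auto
  show ?case
  proof (intro conjI impI allI)
    fix q2 k2 assume "j + d + int (length x) \<in> {1..int (length u)}" "exits \<delta> u r (j + d + int (length x)) q2 k2"
    then show "exits \<delta> u p (j + int (length x)) q2 k2"
      using exits.move[where delta=\<delta> and r=r and d=d, OF p L] by (simp add: algebra_simps)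
  next
    assume "j + d + int (length x) \<notin> {1..int (length u)}"
    then show "exits \<delta> u p (j + int (length x)) r (j + d + int (length x))"
      using exits.leave[where delta=\<delta> and r=r and d=d, OF p L] by (simp add: algebra_simps)
  qed
next
  case (move j p r d q k)
  have "u ! nat (j + int (length x) - 1) = map f v ! nat (j - 1)"
    using nth_mid[of x "j + int (length x)" "map f v" z] move(1,2,10) by simp
  also have "\<dots> = f (v ! nat (j-1))" using move(1,2) by (simp add: nat_less_iff)
  finally have L: "\<delta> p (u ! nat (j + int (length x) - 1)) = Some (r,d)" using move(3,7,8) by simp
  have p: "1 \<le> j + int (length x)" "j + int (length x) \<le> int (length u)" using move(1,2,10) by auto
  have rQ: "r \<in> Q" using move(3,7,9) by blast
  have IH: "(k + int (length x) \<in> {1..int (length u)} \<longrightarrow> (\<forall>q2 k2. exits \<delta> u q (k + int (length x)) q2 k2 \<longrightarrow> exits \<delta> u r (j + d + int (length x)) q2 k2)) \<and>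
         (k + int (length x) \<notin> {1..int (length u)} \<longrightarrow> exits \<delta> u r (j + d + int (length x)) q (k + int (length x)))"
    using move(6)[OF rQ move(8,9,10)] by simp
  have inr: "j + d + int (length x) \<in> {1..int (length u)}" using move(4,10) by auto
  show ?case
  proof (intro conjI impI allI)
    fix q2 k2 assume "k + int (length x) \<in> {1..int (length u)}" "exits \<delta> u q (k + int (length x)) q2 k2"
    then have "exits \<delta> u r (j + d + int (length x)) q2 k2" using IH by blast
    then show "exits \<delta> u p (j + int (length x)) q2 k2"
      using exits.move[where delta=\<delta> and r=r and d=d, OF p L] inr by (simp add: algebra_simps)
  next
    assume "k + int (length x) \<notin> {1..int (length u)}"
    then have "exits \<delta> u r (j + d + int (length x)) q (k + int (length x))" using IH by blast
    then show "exits \<delta> u p (j + int (length x)) q (k + int (length x))"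
      using exits.move[where delta=\<delta> and r=r and d=d, OF p L] inr by (simp add: algebra_simps)
  qed
qed



lemma stepA:
  assumes "exits (D n) u p j q k" "p = n" "3 \<le> n"
  shows "q = n \<or> (\<exists>p0. 1 \<le> p0 \<and> p0 \<le> int (length u) \<and> u ! nat (p0-1) mod 3 = 2 \<and>
          ((p0 = 1 \<and> q = n-1 \<and> k = 0) \<or> (2 \<le> p0 \<and> exits (D n) u (n-1) (p0-1) q k)))"
  using assms
proof (induction rule: exits.induct)
  case (leave j p r d)
  show ?case
  proof (cases "u ! nat (j-1) mod 3 = 2")
    case True
    then have rd: "r = n-1" "d = -1" using leave(3,5,6) D_hash by auto
    then have "j = 1" using leave(1,2,4) by auto
    then show ?thesis using True rd leave(1,2) by (intro disjI2 exI[of _ j]) auto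
  next
    case False
    then have "r = n" using leave(3,5,6) D_top by auto
    then show ?thesis by simp
  qed
next
  case (move j p r d q k)
  show ?case
  proof (cases "u ! nat (j-1) mod 3 = 2")
    case True
    then have rd: "r = n-1" "d = -1" using move(3,7,8) D_hash by auto
    then have "2 \<le> j" using move(1,2,4) by auto
    then show ?thesis using True rd move(1,2,5) by (intro disjI2 exI[of _ j]) auto
  next
    case False
    then have "r = n" using move(3,7,8) D_top by auto
    then show ?thesis using move(6) move(8) by auto
  qed
qed

lemma split3: "a \<le> p \<Longrightarrow> take a u @ take (p - a) (drop a u) @ drop p u = u"
proof -
  assume "a \<le> p"
  then have "take p u = take a u @ take (p - a) (drop a u)" using take_add[of a "p-a" u] by simp
  then show ?thesis by (metis append.assoc append_take_drop_id)
qed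

lemma B1:
  assumes n3: "3 \<le> n"
  and IH: "\<forall>v i. 1 \<le> i \<and> i \<le> int (length v) \<and> exits (D (n-1)) v (n-1) i 1 (int (length v) + 1) \<longrightarrow> L \<le> length v"
  and a: "1 \<le> a" "a < p" "p \<le> length u" "u ! (p-1) mod 3 = 2"
     "\<forall>t. a \<le> t \<and> t < p \<longrightarrow> u ! (t-1) mod 3 \<noteq> 2" "a = 1 \<or> u ! (a-2) mod 3 = 2"
  shows "exn (D n) u m (n-1) j 1 (int (length u) + 1) \<Longrightarrow> int a \<le> j \<Longrightarrow> j < int p \<Longrightarrow> L \<le> p - a"
proof (induction m arbitrary: j rule: less_induct)
  case (less m j)
  define x where "x = take (a-1) u"
  define y where "y = take (p-a) (drop (a-1) u)"
  define z where "z = drop (p-1) u"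
  have u: "u = x @ y @ z" unfolding x_def y_def z_def using split3[of "a-1" "p-1" u] a(1,2)
    by (simp add: diff_diff_eq)
  have lx: "length x = a-1" unfolding x_def using a by auto
  have ly: "length y = p-a" unfolding y_def using a by auto
  have yl: "\<forall>c\<in>set y. c mod 3 \<noteq> 2"
  proof
    fix c assume "c \<in> set y"
    then obtain i where i: "i < length y" "c = y ! i" by (metis in_set_conv_nth)
    have "c = u ! (a-1+i)" using i ly a unfolding y_def by simp
    also have "a-1+i = (a+i) - 1" using a by simp
    finally show "c mod 3 \<noteq> 2" using a(5) i ly by auto
  qed
  obtain q' k' where E: "exits (D n) y (n-1) (j - int (length x)) q' k'"
    and K: "k' \<notin> {1..int (length y)}"
    and C: "(if k' + int (length x) \<in> {1..int (length u)} then (\<exists>m'<m. exn (D n) u m' q' (k' + int (length x)) 1 (int (length u) + 1))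
      else q' = 1 \<and> k' + int (length x) = int (length u) + 1)"
    using crop[OF less(2) u] less(3,4) lx ly a by auto
  have S: "exits (D (n-1)) (map (\<lambda>c. c div 3) y) (n-1) (j - int (length x)) q' k'"
    using strip[OF E n3 _ yl] n3 by simp
  have R: "(k' = 0 \<or> k' = int (length y) + 1) \<and> 1 \<le> q' \<and> q' \<le> n-1"
    using exits_res[OF S] n3 by simp
  show ?case
  proof (cases "k' = 0")
    case False
    then have k': "k' = int (length y) + 1" using R by simp
    then have kx: "k' + int (length x) = int p" using lx ly a by simp
    then obtain m' where m': "exn (D n) u m' q' (int p) 1 (int (length u) + 1)"
      using C a by (auto split: if_splits)
    show ?thesis
    proof (cases "q' = 1")
      case True
      have v1: "1 \<le> j - int (length x)" "j - int (length x) \<le> int (length (map (\<lambda>c. c div 3) y))"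
        using less(3,4) lx ly a by auto
      have "exits (D (n-1)) (map (\<lambda>c. c div 3) y) (n-1) (j - int (length x)) 1 (int (length (map (\<lambda>c. c div 3) y)) + 1)"
        using S k' True by simp
      then have "L \<le> length (map (\<lambda>c. c div 3) y)"
        using IH v1 by blast
      then show ?thesis using ly by simp
    next
      case False
      from m' obtain r d where "D n q' (u ! nat (int p - 1)) = Some (r,d)"
        by (cases rule: exn.cases) auto
      moreover have "nat (int p - 1) = p - 1" by simp
      ultimately have "D n q' (u ! (p-1)) = Some (r,d)" by simp
      then show ?thesis using D_hash[OF n3 a(4)] False R n3 by (auto split: if_splits)
    qed
  next
    case True
    show ?thesis
    proof (cases "a = 1")
      case True
      then show ?thesis using C \<open>k' = 0\<close> lx by auto
    next
      case False
      then have a2: "2 \<le> a" "u ! (a-2) mod 3 = 2" using a by auto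
      have kx: "k' + int (length x) = int (a-1)" using True lx by simp
      then obtain m' where m': "m' < m" "exn (D n) u m' q' (int (a-1)) 1 (int (length u) + 1)"
        using C a2 a by (auto split: if_splits)
      have idx: "nat (int (a-1) - 1) = a-2" by simp
      from m'(2) show ?thesis
      proof (cases rule: exn.cases)
        case (leave d)
        then show ?thesis using D_hash[OF n3 a2(2)] idx R n3 by (auto split: if_splits)
      next
        case (move r d m'')
        then have q1: "q' = 1" and rd: "r = n-1" "d = 1"
          using D_hash[OF n3 a2(2)] idx R n3 by (auto split: if_splits)
        have "exn (D n) u m'' (n-1) (int a) 1 (int (length u) + 1)"
          using move rd a2 by (simp add: of_nat_diff)
        then show ?thesis using less(1)[of m'' "int a"] move m' a by auto
      qed
    qed
  qed
qed



lemma B2: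
  assumes n3: "3 \<le> n"
  and IH: "\<forall>v i. 1 \<le> i \<and> i \<le> int (length v) \<and> exits (D (n-1)) v (n-1) i 1 (int (length v) + 1) \<longrightarrow> L \<le> length v"
  and b: "2 \<le> b" "b \<le> length u + 1" "\<forall>t. b \<le> t \<and> t \<le> length u \<longrightarrow> u!(t-1) mod 3 \<noteq> 2" "u!(b-2) mod 3 = 2"
  shows "exn (D n) u m s j 1 (int (length u) + 1) \<Longrightarrow> s < n \<Longrightarrow> (j < int b \<or> (s = n-1 \<and> j = int b)) \<Longrightarrow> L \<le> length u + 1 - b"
proof (induction m arbitrary: s j rule: less_induct)
  case (less m s j)
  have jr: "1 \<le> j" "j \<le> int (length u)" using exn_pos[OF less(2)] by auto
  show ?case
  proof (cases "s = n-1 \<and> j = int b")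
    case True
    define x where "x = take (b-1) u"
    define y where "y = drop (b-1) u"
    have u: "u = x @ y @ []" unfolding x_def y_def by simp
    have bu: "b \<le> length u" using True jr by simp
    have lx: "length x = b-1" unfolding x_def using bu by auto
    have ly: "length y = length u + 1 - b" unfolding y_def length_drop using bu b(1) by arith
    have yl: "\<forall>c\<in>set y. c mod 3 \<noteq> 2"
    proof
      fix c assume "c \<in> set y"
      then obtain i where i: "i < length y" "c = y ! i" by (metis in_set_conv_nth)
      have "c = u ! (b-1+i)" using i ly bu unfolding y_def by simp
      also have "b-1+i = (b+i) - 1" using b by simp
      finally show "c mod 3 \<noteq> 2" using b(3) i ly by auto
    qed
    obtain q' k' where E: "exits (D n) y (n-1) (j - int (length x)) q' k'"
      and C: "(if k' + int (length x) \<in> {1..int (length u)} then (\<exists>m'<m. exn (D n) u m' q' (k' + int (length x)) 1 (int (length u) + 1))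
        else q' = 1 \<and> k' + int (length x) = int (length u) + 1)"
      using crop[OF less(2) u] True lx ly bu b by auto
    have S: "exits (D (n-1)) (map (\<lambda>c. c div 3) y) (n-1) (j - int (length x)) q' k'"
      using strip[OF E n3 _ yl] n3 by simp
    have R: "(k' = 0 \<or> k' = int (length y) + 1) \<and> 1 \<le> q' \<and> q' \<le> n-1"
      using exits_res[OF S] n3 by simp
    show ?thesis
    proof (cases "k' = 0")
      case False
      then have k': "k' = int (length y) + 1" using R by simp
      then have "q' = 1" using C lx ly bu by (auto split: if_splits)
      have v1: "1 \<le> j - int (length x)" "j - int (length x) \<le> int (length (map (\<lambda>c. c div 3) y))"
        using True lx ly bu b by auto
      have "exits (D (n-1)) (map (\<lambda>c. c div 3) y) (n-1) (j - int (length x)) 1 (int (length (map (\<lambda>c. c div 3) y)) + 1)"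
        using S k' \<open>q' = 1\<close> by simp
      then have "L \<le> length (map (\<lambda>c. c div 3) y)"
        using IH v1 by blast
      then show ?thesis using ly by simp
    next
      case k0: True
      have kx: "k' + int (length x) = int (b-1)" using k0 lx by simp
      then obtain m' where m': "m' < m" "exn (D n) u m' q' (int (b-1)) 1 (int (length u) + 1)"
        using C b bu by (auto split: if_splits)
      have "q' < n" using R n3 by linarith
      then show ?thesis using less(1)[OF m'(1) m'(2)] b by (simp add: of_nat_diff)
    qed
  next
    case False
    then have jb: "j < int b" using less(4) by auto
    from less(2) show ?thesis
    proof (cases rule: exn.cases)
      case (leave d)
      then have L: "D n s (u ! nat (j-1)) = Some (1,d)" "j + d = int (length u) + 1" by auto
      have dr: "d = 1 \<or> d = -1" using D_range[OF L(1)] n3 by simp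
      then have "j = int (length u)" "d = 1" using L(2) jr by auto
      then have bb: "b = length u + 1" using jb b by simp
      have "nat (j - 1) = b - 2" using \<open>j = int (length u)\<close> bb by simp
      then have "u ! nat (j-1) mod 3 = 2" using b(4) by simp
      then show ?thesis using L(1) D_hash[OF n3] less(3) n3 by (auto split: if_splits)
    next
      case (move r d m0)
      then have M: "m = Suc m0" "D n s (u ! nat (j-1)) = Some (r,d)" "exn (D n) u m0 r (j + d) 1 (int (length u) + 1)" by auto
      have dr: "d = 1 \<or> d = -1" using D_range[OF M(2)] n3 by simp
      have rn: "r < n" using D_less[OF n3 less(3) M(2)] .
      show ?thesis
      proof (cases "j + d < int b")
        case True
        then show ?thesis using less(1)[OF _ M(3) rn] M(1) by auto
      next
        case False
        then have jd: "j + d = int b" "d = 1" using dr jb by auto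
        then have "nat (j - 1) = b - 2" by simp
        then have "u ! nat (j-1) mod 3 = 2" using b(4) by simp
        then have "s = 1" "r = n-1" using M(2) D_hash[OF n3] less(3) n3 by (auto split: if_splits)
        then show ?thesis using less(1)[of m0 r "j+d"] M(1,3) rn jd by auto
      qed
    qed
  qed
qed

lemma seg_left: "1 \<le> j \<Longrightarrow> j \<le> length u \<Longrightarrow> u!(j-1) mod 3 \<noteq> 2 \<Longrightarrow>
  \<exists>a. 1 \<le> a \<and> a \<le> j \<and> (\<forall>t. a \<le> t \<and> t \<le> j \<longrightarrow> u!(t-1) mod 3 \<noteq> 2) \<and> (a = 1 \<or> u!(a-2) mod 3 = 2)"
proof (induction j)
  case 0 then show ?case by simp
next
  case (Suc j)
  show ?case
  proof (cases "j = 0")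
    case True then show ?thesis using Suc by (intro exI[of _ 1]) auto
  next
    case False
    show ?thesis
    proof (cases "u!(j-1) mod 3 = 2")
      case True
      then show ?thesis using Suc False by (intro exI[of _ "Suc j"]) (auto simp: le_Suc_eq)
    next
      case F2: False
      then obtain a where a: "1 \<le> a \<and> a \<le> j \<and> (\<forall>t. a \<le> t \<and> t \<le> j \<longrightarrow> u!(t-1) mod 3 \<noteq> 2) \<and> (a = 1 \<or> u!(a-2) mod 3 = 2)"
        using Suc False by auto
      then show ?thesis using Suc by (intro exI[of _ a]) (auto simp: le_Suc_eq)
    qed
  qed
qed

lemma seg_right: "1 \<le> p \<Longrightarrow> p \<le> length u \<Longrightarrow> u!(p-1) mod 3 = 2 \<Longrightarrow>
  \<exists>b. p < b \<and> b \<le> length u + 1 \<and> (\<forall>t. b \<le> t \<and> t \<le> length u \<longrightarrow> u!(t-1) mod 3 \<noteq> 2) \<and> u!(b-2) mod 3 = 2"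
proof -
  assume a: "1 \<le> p" "p \<le> length u" "u!(p-1) mod 3 = 2"
  define S where "S = {t. 1 \<le> t \<and> t \<le> length u \<and> u!(t-1) mod 3 = 2}"
  have fin: "finite S" unfolding S_def by (rule finite_subset[of _ "{..length u}"]) auto
  have pS: "p \<in> S" unfolding S_def using a by auto
  define M where "M = Max S"
  have M: "M \<in> S" "p \<le> M" unfolding M_def using fin pS by (auto intro: Max_in)
  have Mx: "\<forall>t. t \<in> S \<longrightarrow> t \<le> M" unfolding M_def using fin by auto
  show ?thesis
  proof (intro exI[of _ "Suc M"] conjI allI impI)
    show "p < Suc M" using M by simp
    show "Suc M \<le> length u + 1" using M unfolding S_def by simp
    fix t assume "Suc M \<le> t \<and> t \<le> length u"
    then show "u ! (t - 1) mod 3 \<noteq> 2" using Mx M unfolding S_def by force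
  next
    show "u ! (Suc M - 2) mod 3 = 2" using M unfolding S_def by simp
  qed
qed



lemma lower:
  assumes n3: "3 \<le> n"
  and IH: "\<forall>v i. 1 \<le> i \<and> i \<le> int (length v) \<and> exits (D (n-1)) v (n-1) i 1 (int (length v) + 1) \<longrightarrow> L \<le> length v"
  and i: "1 \<le> i" "i \<le> int (length u)" and E: "exits (D n) u n i 1 (int (length u) + 1)"
  shows "2 * L + 1 \<le> length u"
proof -
  from stepA[OF E refl n3] n3 obtain p0 where p0: "1 \<le> p0" "p0 \<le> int (length u)" "u ! nat (p0-1) mod 3 = 2" "2 \<le> p0"
     "exits (D n) u (n-1) (p0-1) 1 (int (length u) + 1)"
    by auto
  define p where "p = nat p0"
  have pp: "p0 = int p" "2 \<le> p" "p \<le> length u" using p0 unfolding p_def by auto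
  have pH: "u!(p-1) mod 3 = 2" using p0(3) pp by (simp add: nat_diff_distrib)
  have ne: "u!(p-2) mod 3 \<noteq> 2"
  proof
    assume h: "u!(p-2) mod 3 = 2"
    from p0(5) obtain r d where "D n (n-1) (u ! nat (p0-1-1)) = Some (r,d)"
      by (cases rule: exits.cases) auto
    moreover have "nat (p0-1-1) = p - 2" using pp by simp
    ultimately show False using h D_hash[OF n3] n3 by (auto split: if_splits)
  qed
  have pe: "p - 1 - 1 = p - 2" by simp
  have s: "1 \<le> p-1" "p-1 \<le> length u" "u!(p-1-1) mod 3 \<noteq> 2" using pp ne pe by auto
  obtain a where a: "1 \<le> a" "a \<le> p-1" "\<forall>t. a \<le> t \<and> t \<le> p-1 \<longrightarrow> u!(t-1) mod 3 \<noteq> 2" "a = 1 \<or> u!(a-2) mod 3 = 2"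
    using seg_left[OF s] by blast
  obtain m where m: "exn (D n) u m (n-1) (p0-1) 1 (int (length u) + 1)"
    using exits_exn[OF p0(5)] by blast
  have a5: "\<forall>t. a \<le> t \<and> t < p \<longrightarrow> u!(t-1) mod 3 \<noteq> 2" using a(3) by auto
  have L1: "L \<le> p - a"
    by (rule B1[OF n3 IH a(1) _ pp(3) pH a5 a(4) m]) (use a pp in auto)
  obtain b where b: "p < b" "b \<le> length u + 1" "\<forall>t. b \<le> t \<and> t \<le> length u \<longrightarrow> u!(t-1) mod 3 \<noteq> 2" "u!(b-2) mod 3 = 2"
    using seg_right[of p u] pp pH by auto
  have L2: "L \<le> length u + 1 - b"
    by (rule B2[OF n3 IH _ b(2,3,4) m]) (use b pp n3 in auto)
  show ?thesis using L1 L2 a b pp by linarith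
qed

lemma walkL:
  assumes n3: "3 \<le> n" and u: "u = map (\<lambda>c. 3*c) v @ [2] @ z" and v1: "1 \<le> length v"
  and E: "exits (D n) u (n-1) (int (length v)) Q K"
  shows "nat (int (length v) + 1 - j) = t \<Longrightarrow> 1 \<le> j \<Longrightarrow> j \<le> int (length v) + 1 \<Longrightarrow> exits (D n) u n j Q K"
proof (induction t arbitrary: j)
  case 0
  then have j: "j = int (length v) + 1" by auto
  have c: "u ! nat (j - 1) = 2" using j u by (simp add: nth_append)
  have d: "D n n (u ! nat (j-1)) = Some (n-1, -1)" using c D_hash[OF n3] by simp
  have E': "exits (D n) u (n-1) (j + -1) Q K" using E j by simp
  show ?case
    by (rule exits.move[where delta="D n" and r="n-1" and d="-1", OF _ _ d _ E']) (use j u v1 in auto)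
next
  case (Suc t)
  then have j: "j \<le> int (length v)" by auto
  have "nat (j-1) < length v" using j Suc(3) by auto
  then have c: "u ! nat (j - 1) = 3 * (v ! nat (j-1))" using u by (simp add: nth_append)
  have d: "D n n (u ! nat (j-1)) = Some (n, 1)" using c D_top[OF n3] by simp
  have E': "exits (D n) u n (j + 1) Q K" using Suc(1)[of "j+1"] Suc(2,3) j by auto
  show ?case
    by (rule exits.move[where delta="D n" and r="n" and d="1", OF _ _ d _ E']) (use j u Suc(3) in auto)
qed

lemma walkR:
  assumes n3: "3 \<le> n" and u: "u = x @ [2] @ map (\<lambda>c. 3*c+1) v" and x1: "1 \<le> length x"
  and E: "exits (D n) u (n-1) (int (length x)) Q K"
  shows "nat (j - int (length x) - 1) = t \<Longrightarrow> int (length x) + 1 \<le> j \<Longrightarrow> j \<le> int (length u) \<Longrightarrow> exits (D n) u n j Q K"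
proof (induction t arbitrary: j)
  case 0
  then have j: "j = int (length x) + 1" by auto
  have c: "u ! nat (j - 1) = 2" using j u by (simp add: nth_append)
  have d: "D n n (u ! nat (j-1)) = Some (n-1, -1)" using c D_hash[OF n3] by simp
  have E': "exits (D n) u (n-1) (j + -1) Q K" using E j by simp
  show ?case
    by (rule exits.move[where delta="D n" and r="n-1" and d="-1", OF _ _ d _ E']) (use j u x1 in auto)
next
  case (Suc t)
  then have j: "int (length x) + 2 \<le> j" by auto
  define i where "i = nat (j - int (length x) - 2)"
  have i: "nat (j-1) = length x + Suc i" "i < length v" using j Suc(4) u unfolding i_def by auto
  then have c: "u ! nat (j - 1) = 3 * (v ! i) + 1" using u by (simp add: nth_append)
  have d: "D n n (u ! nat (j-1)) = Some (n, -1)" using c D_top[OF n3] by simp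
  have E': "exits (D n) u n (j + -1) Q K" using Suc(1)[of "j-1"] Suc(2,4) j by auto
  show ?case
    by (rule exits.move[where delta="D n" and r="n" and d="-1", OF _ _ d _ E']) (use j u Suc(4) in auto)
qed



lemma witness:
  assumes n3: "3 \<le> n" and IH: "\<forall>i. 1 \<le> i \<and> i \<le> int (length v) \<longrightarrow> exits (D (n-1)) v (n-1) i 1 (int (length v) + 1)"
  and v2: "2 \<le> length v" and u: "u = map (\<lambda>c. 3*c) v @ [2] @ map (\<lambda>c. 3*c+1) v"
  and i: "1 \<le> i" "i \<le> int (length u)"
  shows "exits (D n) u n i 1 (int (length u) + 1)"
proof -
  have lu: "length u = 2 * length v + 1" using u by simp
  have cl: "\<forall>q c r d. q \<in> {q. q < n} \<longrightarrow> D (n-1) q c = Some (r,d) \<longrightarrow> r \<in> {q. q < n}"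
  proof (intro allI impI)
    fix q c r d assume "q \<in> {q. q < n}" "D (n-1) q c = Some (r,d)"
    moreover have "2 \<le> n-1" using n3 by simp
    ultimately have "r \<le> n-1" using D_range by blast
    then show "r \<in> {q. q < n}" using n3 by auto
  qed
  have dm: "\<And>c::nat. (3*c+1) div 3 = c" "\<And>c::nat. (3*c+1) mod 3 = 1" by presburger+
  have eqR: "\<forall>q c. q \<in> {q. q < n} \<longrightarrow> D n q (3*c+1) = D (n-1) q c" using D_low[OF n3] dm by simp
  have eqL: "\<forall>q c. q \<in> {q. q < n} \<longrightarrow> D n q (3*c) = D (n-1) q c" using D_low[OF n3] by simp
  have nQ: "n - 1 \<in> {q. q < n}" using n3 by simp
  have R0: "exits (D (n-1)) v (n-1) 1 1 (int (length v) + 1)" using IH v2 by simp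
  have "(int (length v) + 1 + int (length (map (\<lambda>c. 3*c) v @ [2])) \<notin> {1..int (length u)} \<longrightarrow>
      exits (D n) u (n-1) (1 + int (length (map (\<lambda>c. 3*c) v @ [2]))) 1 (int (length v) + 1 + int (length (map (\<lambda>c. 3*c) v @ [2]))))"
    using embed[where \<delta>="D n" and f="\<lambda>c. 3*c+1" and Q="{q. q < n}" and u=u and x="map (\<lambda>c. 3*c) v @ [2]" and z="[]", OF R0 nQ eqR cl] u by simp
  then have R: "exits (D n) u (n-1) (int (length v) + 1 + 1) 1 (int (length u) + 1)" using lu by (simp add: algebra_simps)
  have c: "u ! nat (int (length v) + 1 - 1) = 2" using u by (simp add: nth_append)
  have d: "D n 1 (u ! nat (int (length v) + 1 - 1)) = Some (n-1, 1)" using c D_hash[OF n3] n3 by simp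
  have M: "exits (D n) u 1 (int (length v) + 1) 1 (int (length u) + 1)"
    by (rule exits.move[where delta="D n" and r="n-1" and d="1", OF _ _ d _ R]) (use lu v2 in auto)
  have L0: "exits (D (n-1)) v (n-1) (int (length v)) 1 (int (length v) + 1)" using IH v2 by simp
  have "(int (length v) + 1 + int (length ([]::nat list)) \<in> {1..int (length u)} \<longrightarrow>
      (\<forall>q2 k2. exits (D n) u 1 (int (length v) + 1 + int (length ([]::nat list))) q2 k2 \<longrightarrow>
        exits (D n) u (n-1) (int (length v) + int (length ([]::nat list))) q2 k2))"
    using embed[where \<delta>="D n" and f="\<lambda>c. 3*c" and Q="{q. q < n}" and u=u and x="[]" and z="[2] @ map (\<lambda>c. 3*c+1) v", OF L0 nQ eqL cl] u by blast
  then have Lf: "exits (D n) u (n-1) (int (length v)) 1 (int (length u) + 1)" using M lu by simp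
  show ?thesis
  proof (cases "i \<le> int (length v) + 1")
    case True
    show ?thesis
      by (rule walkL[where n=n and u=u and v=v and z="map (\<lambda>c. 3*c+1) v" and t="nat (int (length v) + 1 - i)"])
         (use n3 u v2 i True Lf in auto)
  next
    case False
    show ?thesis
      by (rule walkR[where n=n and u=u and x="map (\<lambda>c. 3*c) v" and v=v and t="nat (i - int (length v) - 1)"])
         (use n3 u v2 i False Lf in auto)
  qed
qed

lemma D2: "D 2 q c = (if q = 2 \<and> c = 0 then Some (2,1) else if q = 2 \<and> c = 1 then Some (1,-1)
     else if q = 1 \<and> c \<le> 1 then Some (1,1) else None)"
  by (subst D.simps) simp

lemma base_wit: "1 \<le> i \<Longrightarrow> i \<le> 2 \<Longrightarrow> exits (D 2) [0,1] 2 i 1 3"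
proof -
  have e4: "exits (D 2) [0,1] 1 2 1 (2 + 1)"
    by (rule exits.leave[where d=1]) (auto simp: D2)
  have e3: "exits (D 2) [0,1] 1 1 1 3"
    by (rule exits.move[where r=1 and d=1]) (use e4 in \<open>auto simp: D2\<close>)
  have e2: "exits (D 2) [0,1] 2 2 1 3"
    by (rule exits.move[where r=1 and d="-1"]) (use e3 in \<open>auto simp: D2\<close>)
  have e1: "exits (D 2) [0,1] 2 1 1 3"
    by (rule exits.move[where r=2 and d=1]) (use e2 in \<open>auto simp: D2\<close>)
  assume "1 \<le> i" "i \<le> 2"
  then have "i = 1 \<or> i = 2" by auto
  then show ?thesis using e1 e2 by auto
qed

lemma base_low: "1 \<le> i \<Longrightarrow> i \<le> int (length u) \<Longrightarrow> exits (D 2) u 2 i 1 (int (length u) + 1) \<Longrightarrow> 2 \<le> length u"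
proof (rule ccontr)
  assume a: "1 \<le> i" "i \<le> int (length u)" "exits (D 2) u 2 i 1 (int (length u) + 1)" "\<not> 2 \<le> length u"
  then have l: "length u = 1" "i = 1" by auto
  from a(3) show False
  proof (cases rule: exits.cases)
    case (leave d)
    then show False using l by (auto simp: D2 split: if_splits)
  next
    case (move r d)
    then show False using l by (auto simp: D2 split: if_splits)
  qed
qed

lemma main_ind: "2 \<le> n \<Longrightarrow> (\<forall>i. 1 \<le> i \<and> i \<le> int (length (W n)) \<longrightarrow> exits (D n) (W n) n i 1 (int (length (W n)) + 1)) \<and>
   (\<forall>v i. 1 \<le> i \<and> i \<le> int (length v) \<and> exits (D n) v n i 1 (int (length v) + 1) \<longrightarrow> length (W n) \<le> length v)"
proof (induction n rule: nat_induct_at_least)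
  case base
  have W2: "W 2 = [0,1]" by (simp add: W.simps)
  show ?case unfolding W2
  proof (intro conjI allI impI)
    fix i assume "1 \<le> i \<and> i \<le> int (length [0::nat,1])"
    then show "exits (D 2) [0,1] 2 i 1 (int (length [0::nat,1]) + 1)" using base_wit by simp
  next
    fix v i assume h: "1 \<le> i \<and> i \<le> int (length v) \<and> exits (D 2) v 2 i 1 (int (length v) + 1)"
    then show "length [0::nat,1] \<le> length v" using base_low[of i v] by simp
  qed
next
  case (Suc n)
  have n3: "3 \<le> Suc n" using Suc(1) by simp
  have Wn: "W (Suc n) = map (\<lambda>c. 3*c) (W n) @ [2] @ map (\<lambda>c. 3*c+1) (W n)"
    using Suc(1) by (subst W.simps) simp
  have v2: "2 \<le> length (W n)" using len_W[OF Suc(1)]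
  proof -
    have "(1::nat) \<le> 2^(n-2)" by simp
    then show ?thesis using len_W[OF Suc(1)] by linarith
  qed
  have IH1: "\<forall>i. 1 \<le> i \<and> i \<le> int (length (W n)) \<longrightarrow> exits (D (Suc n - 1)) (W n) (Suc n - 1) i 1 (int (length (W n)) + 1)"
    using Suc(2) by simp
  have IH2: "\<forall>v i. 1 \<le> i \<and> i \<le> int (length v) \<and> exits (D (Suc n - 1)) v (Suc n - 1) i 1 (int (length v) + 1) \<longrightarrow> length (W n) \<le> length v"
    using Suc(2) by simp
  show ?case
  proof (intro conjI allI impI)
    fix i assume "1 \<le> i \<and> i \<le> int (length (W (Suc n)))"
    then show "exits (D (Suc n)) (W (Suc n)) (Suc n) i 1 (int (length (W (Suc n))) + 1)"
      using witness[OF n3 IH1 v2 Wn] by blast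
  next
    fix v i assume h: "1 \<le> i \<and> i \<le> int (length v) \<and> exits (D (Suc n)) v (Suc n) i 1 (int (length v) + 1)"
    have "2 * length (W n) + 1 \<le> length v" using lower[OF n3 IH2] h by blast
    then show "length (W (Suc n)) \<le> length v" using Wn by simp
  qed
qed

theorem mainTheorem9:
  fixes n :: nat
  assumes "n \<ge> 2"
  shows "\<exists>(Sig :: nat set) (delta :: nat \<Rightarrow> nat \<Rightarrow> (nat \<times> int) option) (w :: nat list).
           finite Sig \<and> partial_tf n Sig delta \<and> set w \<subseteq> Sig \<and>
           length w = 3 * 2 ^ (n - 2) - 1 \<and>
           (\<forall>i \<in> {1..int (length w)}. exits delta w n i 1 (int (length w) + 1)) \<and>
           (\<forall>u. set u \<subseteq> Sig \<and> u \<noteq> [] \<and>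
                (\<exists>i \<in> {1..int (length u)}. exits delta u n i 1 (int (length u) + 1))
                \<longrightarrow> length u \<ge> length w)"
proof -
  define delta where "delta = (\<lambda>q c. if c \<in> set (W n) then D n q c else None)"
  have MI: "(\<forall>i. 1 \<le> i \<and> i \<le> int (length (W n)) \<longrightarrow> exits (D n) (W n) n i 1 (int (length (W n)) + 1)) \<and>
   (\<forall>v i. 1 \<le> i \<and> i \<le> int (length v) \<and> exits (D n) v n i 1 (int (length v) + 1) \<longrightarrow> length (W n) \<le> length v)"
    using main_ind[OF assms] .
  have ptf: "partial_tf n (set (W n)) delta"
    unfolding partial_tf_def delta_def
  proof (intro allI impI)
    fix q c r d assume "(if c \<in> set (W n) then D n q c else None) = Some (r, d)"
    then have "c \<in> set (W n)" "D n q c = Some (r,d)" by (auto split: if_splits)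
    then show "q \<in> {1..n} \<and> c \<in> set (W n) \<and> r \<in> {1..n} \<and> d \<in> {-1, 1}"
      using D_range[of n q c r d] assms by auto
  qed
  have P1: "\<forall>i \<in> {1..int (length (W n))}. exits delta (W n) n i 1 (int (length (W n)) + 1)"
  proof
    fix i assume "i \<in> {1..int (length (W n))}"
    then have "exits (D n) (W n) n i 1 (int (length (W n)) + 1)" using MI by auto
    then show "exits delta (W n) n i 1 (int (length (W n)) + 1)"
      by (rule exits_cong) (simp add: delta_def)
  qed
  have P2: "\<forall>u. set u \<subseteq> set (W n) \<and> u \<noteq> [] \<and>
                (\<exists>i \<in> {1..int (length u)}. exits delta u n i 1 (int (length u) + 1))
                \<longrightarrow> length u \<ge> length (W n)"
  proof (intro allI impI)
    fix u assume "set u \<subseteq> set (W n) \<and> u \<noteq> [] \<and> (\<exists>i \<in> {1..int (length u)}. exits delta u n i 1 (int (length u) + 1))"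
    then obtain i where i: "i \<in> {1..int (length u)}" "exits delta u n i 1 (int (length u) + 1)" by blast
    have "exits (D n) u n i 1 (int (length u) + 1)"
      by (rule exits_mono[OF i(2)]) (simp add: delta_def split: if_splits)
    then show "length u \<ge> length (W n)" using MI i(1) by auto
  qed
  show ?thesis
    by (intro exI[of _ "set (W n)"] exI[of _ delta] exI[of _ "W n"]) (use ptf P1 P2 len_W[OF assms] in auto)
qed

end
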